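(* Let $s=2$, $n=4$, and for $a\in(0,1/8)$ set $p_{12}=p_{23}=p_{34}=p_{41}=a$ and $p_{13}=p_{24}=\frac14(1-8a)$ (with $p_{ji}=p_{ij}$). Take initial data $y_1=(X_0,0)$, $y_2=(0,X_0)$, $y_3=(-X_0,0)$, $y_4=(0,-X_0)$ with $X_0>0$, and let $Y(t)$ be the solution of the gradient flow of relative entropy. Then: (i) if $\beta(x)=(1+x)^{-1}$ and $a\in(1/10,1/8)$, there is a constant $c>0$ such that $\operatorname{diam}Y(t)\ge c\,t^{1/4}$ for all $t\ge1$; (ii) if $\beta(x)=e^{-x}$ and $a\in(1/12,1/8)$, there is a constant $c>0$ such that $\operatorname{diam}Y(t)\ge c$ for all $t\ge0$.
   Context: Let $\mathcal{P}_n=\{(i,j): i\neq j\}$ and $(p_{ij})$ a symmetric probability distribution on $\mathcal{P}_n$. For $Y=(y_1,\dots,y_n)\in(\mathbb{R}^s)^n$ define $q_{ij}=\beta(|y_i-y_j|^2)/\sum_{k\neq \ell}\beta(|y_k-y_\ell|^2)$. The gradient flow of relative entropy is the ODE system $$\frac{dy_i}{dt}=4\sum_{j\neq i}(p_{ij}-q_{ij})(y_i-y_j)(\log\beta)'(|y_i-y_j|^2),\qquad i=1,\dots,n.$$ $\operatorname{diam}Y=\max_{i,j}|y_i-y_j|$. *)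

theory Defs
  imports "HOL-Analysis.Analysis"
begin

text \<open>Configurations of n points in the plane R^2, indexed by 1..n.\<close>
type_synonym config = "nat \<Rightarrow> real^2"

definition qq :: "(real \<Rightarrow> real) \<Rightarrow> nat \<Rightarrow> config \<Rightarrow> nat \<Rightarrow> nat \<Rightarrow> real" where
  "qq \<beta> n y i j =
     \<beta> ((norm (y i - y j))^2) /
     (\<Sum>k\<in>{1..n}. \<Sum>l\<in>{1..n}-{k}. \<beta> ((norm (y k - y l))^2))"

definition flow_rhs :: "(nat \<Rightarrow> nat \<Rightarrow> real) \<Rightarrow> (real \<Rightarrow> real) \<Rightarrow> nat \<Rightarrow> config \<Rightarrow> nat \<Rightarrow> real^2" where
  "flow_rhs p \<beta> n y i =
     4 *\<^sub>R (\<Sum>j\<in>{1..n}-{i}.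
        ((p i j - qq \<beta> n y i j) * deriv (\<lambda>x. ln (\<beta> x)) ((norm (y i - y j))^2)) *\<^sub>R (y i - y j))"

definition is_flow_solution :: "(nat \<Rightarrow> nat \<Rightarrow> real) \<Rightarrow> (real \<Rightarrow> real) \<Rightarrow> nat \<Rightarrow> config \<Rightarrow> (real \<Rightarrow> config) \<Rightarrow> bool" where
  "is_flow_solution p \<beta> n Y0 Y \<longleftrightarrow>
     (\<forall>i\<in>{1..n}. Y 0 i = Y0 i) \<and>
     (\<forall>t\<ge>0. \<forall>i\<in>{1..n}. ((\<lambda>s. Y s i) has_vector_derivative flow_rhs p \<beta> n (Y t) i) (at t within {0..}))"

definition diam_conf :: "nat \<Rightarrow> config \<Rightarrow> real" where
  "diam_conf n y = Max {norm (y i - y j) | i j. i \<in> {1..n} \<and> j \<in> {1..n}}"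

definition p_ex :: "real \<Rightarrow> nat \<Rightarrow> nat \<Rightarrow> real" where
  "p_ex a i j =
     (if {i,j} \<in> {{1,2},{2,3},{3,4},{4,1}} then a
      else if {i,j} \<in> {{1,3},{2,4}} then (1 - 8*a)/4 else 0)"

definition Y0_ex :: "real \<Rightarrow> config" where
  "Y0_ex X0 i =
     (if i = 1 then vector [X0, 0] else if i = 2 then vector [0, X0]
      else if i = 3 then vector [-X0, 0] else vector [0, -X0])"

end

theory Submission
  imports Defs
begin

lemma prod_lip:
  fixes f1 f2 g1 g2 :: real
  assumes "\<bar>f1 - f2\<bar> \<le> A * S" "\<bar>g1 - g2\<bar> \<le> B * S" "\<bar>f2\<bar> \<le> F" "\<bar>g1\<bar> \<le> G"
    "A \<ge> 0" "B \<ge> 0" "S \<ge> 0"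
  shows "\<bar>f1 * g1 - f2 * g2\<bar> \<le> (A * G + F * B) * S"
proof -
  have "f1 * g1 - f2 * g2 = (f1 - f2) * g1 + f2 * (g1 - g2)" by (simp add: algebra_simps)
  hence "\<bar>f1 * g1 - f2 * g2\<bar> \<le> \<bar>f1 - f2\<bar> * \<bar>g1\<bar> + \<bar>f2\<bar> * \<bar>g1 - g2\<bar>"
    by (simp add: abs_mult[symmetric] abs_triangle_ineq)
  also have "\<dots> \<le> (A*S) * G + F * (B * S)"
    by (intro add_mono mult_mono) (use assms in auto)
  finally show ?thesis by (simp add: algebra_simps)
qed

lemma div_lip:
  fixes f1 f2 g1 g2 :: real
  assumes "\<bar>f1 - f2\<bar> \<le> A * S" "\<bar>g1 - g2\<bar> \<le> B * S" "\<bar>f2\<bar> \<le> F"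
    "g1 \<ge> m" "g2 \<ge> m" "m > 0" "A \<ge> 0" "B \<ge> 0" "S \<ge> 0"
  shows "\<bar>f1 / g1 - f2 / g2\<bar> \<le> (A / m + F * B / m^2) * S"
proof -
  have g1: "g1 > 0" and g2: "g2 > 0" using assms by auto
  have "f1 / g1 - f2 / g2 = (f1 - f2) / g1 + f2 * (g2 - g1) / (g1 * g2)"
    using g1 g2 by (simp add: field_simps)
  hence "\<bar>f1 / g1 - f2 / g2\<bar> \<le> \<bar>f1 - f2\<bar> / g1 + \<bar>f2\<bar> * \<bar>g1 - g2\<bar> / (g1 * g2)"
    using g1 g2 by (metis (no_types, opaque_lifting) abs_divide abs_minus_commute abs_mult abs_of_pos abs_triangle_ineq mult_pos_pos)
  also have "\<bar>f1 - f2\<bar> / g1 \<le> (A*S) / m"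
    by (rule frac_le) (use assms g1 in auto)
  also have "\<bar>f2\<bar> * \<bar>g1 - g2\<bar> / (g1 * g2) \<le> (F * (B*S)) / (m * m)"
  proof (rule frac_le)
    show "0 \<le> F * (B * S)" using assms by (meson abs_ge_zero mult_nonneg_nonneg order_trans)
    show "\<bar>f2\<bar> * \<bar>g1 - g2\<bar> \<le> F * (B * S)" by (intro mult_mono) (use assms in auto)
    show "0 < m * m" using assms by auto
    show "m * m \<le> g1 * g2" by (intro mult_mono) (use assms in auto)
  qed
  finally show ?thesis by (simp add: field_simps power2_eq_square)
qed

abbreviation "wfun \<beta> \<equiv> deriv (\<lambda>x. ln (\<beta> x))"

definition good_beta :: "(real \<Rightarrow> real) \<Rightarrow> bool" where
  "good_beta \<beta> \<longleftrightarrow> (\<forall>M\<ge>0. \<exists>m K. m > 0 \<and> K \<ge> 0 \<and> (\<forall>x\<in>{0..M}. \<beta> x \<ge> m) \<and>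
     (\<forall>x\<in>{0..M}. \<forall>y\<in>{0..M}. \<bar>\<beta> x - \<beta> y\<bar> \<le> K * \<bar>x - y\<bar> \<and> \<bar>wfun \<beta> x - wfun \<beta> y\<bar> \<le> K * \<bar>x - y\<bar>))"

lemma S_ge: 
  fixes y z :: config
  assumes "k \<in> {1..4::nat}"
  shows "norm (y k - z k) \<le> (\<Sum>k\<in>{1..4}. norm (y k - z k))"
  by (rule member_le_sum) (use assms in auto)

lemma dd_bound:
  fixes y :: config
  assumes "\<forall>i\<in>{1..4}. norm (y i) \<le> R" "i \<in> {1..4}" "j \<in> {1..4}"
  shows "norm (y i - y j) \<le> 2*R" "norm (y i - y j)^2 \<in> {0..4*R^2}"
proof -
  show a: "norm (y i - y j) \<le> 2*R"
  proof -
    have "norm (y i) \<le> R" "norm (y j) \<le> R" using assms by auto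
    thus ?thesis using norm_triangle_ineq4[of "y i" "y j"] by linarith
  qed
  have "norm (y i - y j)^2 \<le> (2*R)^2" by (rule power_mono[OF a]) simp
  thus "norm (y i - y j)^2 \<in> {0..4*R^2}" by (simp add: power_mult_distrib)
qed

lemma dd_lip:
  fixes y z :: config
  assumes "\<forall>i\<in>{1..4}. norm (y i) \<le> R" "\<forall>i\<in>{1..4}. norm (z i) \<le> R" "i \<in> {1..4}" "j \<in> {1..4}"
  shows "\<bar>norm (y i - y j)^2 - norm (z i - z j)^2\<bar> \<le> (8*R) * (\<Sum>k\<in>{1..4}. norm (y k - z k))"
proof -
  define S where "S = (\<Sum>k\<in>{1..4}. norm (y k - z k))"
  have a: "norm (y i - y j) \<le> 2*R" "norm (z i - z j) \<le> 2*R" using dd_bound assms by blast+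
  have "\<bar>norm (y i - y j) - norm (z i - z j)\<bar> \<le> norm ((y i - y j) - (z i - z j))"
    by (rule norm_triangle_ineq3)
  also have "\<dots> = norm ((y i - z i) - (y j - z j))" by (simp add: algebra_simps)
  also have "\<dots> \<le> norm (y i - z i) + norm (y j - z j)" by (rule norm_triangle_ineq4)
  also have "\<dots> \<le> 2 * S" using S_ge[of i y z] S_ge[of j y z] assms unfolding S_def by auto
  finally have b: "\<bar>norm (y i - y j) - norm (z i - z j)\<bar> \<le> 2 * S" .
  have "norm (y i - y j)^2 - norm (z i - z j)^2 = (norm (y i - y j) - norm (z i - z j)) * (norm (y i - y j) + norm (z i - z j))"
    by (simp add: power2_eq_square algebra_simps)
  hence "\<bar>norm (y i - y j)^2 - norm (z i - z j)^2\<bar> = \<bar>norm (y i - y j) - norm (z i - z j)\<bar> * (norm (y i - y j) + norm (z i - z j))"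
    by (simp add: abs_mult)
  also have "\<dots> \<le> (2*S) * (4*R)" by (intro mult_mono) (use a b in auto)
  finally show ?thesis unfolding S_def by (simp add: algebra_simps)
qed

lemma diff_lip:
  fixes y z :: config
  assumes "i \<in> {1..4}" "j \<in> {1..4}"
  shows "norm ((y i - y j) - (z i - z j)) \<le> 2 * (\<Sum>k\<in>{1..4}. norm (y k - z k))"
proof -
  have "norm ((y i - y j) - (z i - z j)) = norm ((y i - z i) - (y j - z j))" by (simp add: algebra_simps)
  also have "\<dots> \<le> norm (y i - z i) + norm (y j - z j)" by (rule norm_triangle_ineq4)
  also have "\<dots> \<le> 2 * (\<Sum>k\<in>{1..4}. norm (y k - z k))" using S_ge[of i y z] S_ge[of j y z] assms by auto
  finally show ?thesis .
qed

definition Zd :: "(real \<Rightarrow> real) \<Rightarrow> config \<Rightarrow> real" where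
  "Zd \<beta> y = (\<Sum>k\<in>{1..4}. \<Sum>l\<in>{1..4}-{k}. \<beta> ((norm (y k - y l))^2))"

lemma qq_Zd: "qq \<beta> 4 y i j = \<beta> ((norm (y i - y j))^2) / Zd \<beta> y"
  by (simp add: qq_def Zd_def)

lemma Zd_lower:
  fixes y :: config
  assumes "\<forall>i\<in>{1..4}. \<forall>j\<in>{1..4}. \<beta> ((norm (y i - y j))^2) \<ge> m" "m > 0"
  shows "Zd \<beta> y \<ge> m"
proof -
  have nn: "\<And>k l. k \<in> {1..4} \<Longrightarrow> l \<in> {1..4} \<Longrightarrow> 0 \<le> \<beta> ((norm (y k - y l))^2)"
    using assms by (meson less_le_trans less_imp_le)
  have "m \<le> \<beta> ((norm (y 1 - y 2))^2)" using assms by auto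
  also have "\<dots> \<le> (\<Sum>l\<in>{1..4}-{1}. \<beta> ((norm (y 1 - y l))^2))"
    by (rule member_le_sum) (use nn in auto)
  also have "\<dots> \<le> Zd \<beta> y" unfolding Zd_def
    by (rule member_le_sum[of 1 "{1..4::nat}" "\<lambda>k. \<Sum>l\<in>{1..4}-{k}. \<beta> ((norm (y k - y l))^2)"])
       (use nn in \<open>auto intro!: sum_nonneg\<close>)
  finally show ?thesis .
qed

lemma Zd_lip:
  fixes y z :: config
  assumes "\<forall>k\<in>{1..4}. \<forall>l\<in>{1..4}. \<bar>\<beta> ((norm (y k - y l))^2) - \<beta> ((norm (z k - z l))^2)\<bar> \<le> C"
  shows "\<bar>Zd \<beta> y - Zd \<beta> z\<bar> \<le> 16 * C"
proof -
  have C: "C \<ge> 0" using assms by (meson abs_ge_zero atLeastAtMost_iff le_numeral_extra(4) one_le_numeral order_trans)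
  have "\<bar>Zd \<beta> y - Zd \<beta> z\<bar> = \<bar>\<Sum>k\<in>{1..4}. \<Sum>l\<in>{1..4}-{k}. (\<beta> ((norm (y k - y l))^2) - \<beta> ((norm (z k - z l))^2))\<bar>"
    unfolding Zd_def by (simp add: sum_subtractf)
  also have "\<dots> \<le> (\<Sum>k\<in>{1..4::nat}. \<Sum>l\<in>{1..4}-{k}. \<bar>\<beta> ((norm (y k - y l))^2) - \<beta> ((norm (z k - z l))^2)\<bar>)"
    by (rule order_trans[OF sum_abs]) (intro sum_mono sum_abs)
  also have "\<dots> \<le> (\<Sum>k\<in>{1..4::nat}. \<Sum>l\<in>{1..4::nat}. C)"
  proof (intro sum_mono)
    fix k :: nat assume k: "k \<in> {1..4}"
    have "(\<Sum>l\<in>{1..4}-{k}. \<bar>\<beta> ((norm (y k - y l))^2) - \<beta> ((norm (z k - z l))^2)\<bar>) \<le> (\<Sum>l\<in>{1..4}-{k}. C)"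
      by (intro sum_mono) (use assms k in auto)
    also have "\<dots> \<le> (\<Sum>l\<in>{1..4::nat}. C)" by (rule sum_mono2) (use C in auto)
    finally show "(\<Sum>l\<in>{1..4}-{k}. \<bar>\<beta> ((norm (y k - y l))^2) - \<beta> ((norm (z k - z l))^2)\<bar>) \<le> (\<Sum>l\<in>{1..4::nat}. C)" .
  qed
  also have "\<dots> = 16 * C" by simp
  finally show ?thesis .
qed

lemma flow_lip:
  assumes gb: "good_beta \<beta>" and P: "\<forall>i j. \<bar>p i j\<bar> \<le> P" and R: "R \<ge> 0"
  shows "\<exists>L\<ge>0. \<forall>y z. (\<forall>i\<in>{1..4}. norm (y i) \<le> R) \<longrightarrow> (\<forall>i\<in>{1..4}. norm (z i) \<le> R) \<longrightarrow>
     (\<forall>i\<in>{1..4}. norm (flow_rhs p \<beta> 4 y i - flow_rhs p \<beta> 4 z i) \<le> L * (\<Sum>k\<in>{1..4}. norm (y k - z k)))"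
proof -
  have "4*R^2 \<ge> 0" by simp
  then obtain m K where m: "m > 0" and K: "K \<ge> 0" and bm: "\<forall>x\<in>{0..4*R^2}. \<beta> x \<ge> m"
    and lip: "\<forall>x\<in>{0..4*R^2}. \<forall>y\<in>{0..4*R^2}. \<bar>\<beta> x - \<beta> y\<bar> \<le> K * \<bar>x - y\<bar> \<and> \<bar>wfun \<beta> x - wfun \<beta> y\<bar> \<le> K * \<bar>x - y\<bar>"
    using gb unfolding good_beta_def by blast
  have P0: "P \<ge> 0" using P by (meson abs_ge_zero order_trans)
  define Kd where "Kd = K * (8*R)"
  define Bb where "Bb = \<bar>\<beta> 0\<bar> + K * (4*R^2)"
  define Bw where "Bw = \<bar>wfun \<beta> 0\<bar> + K * (4*R^2)"
  define Lz where "Lz = 16 * Kd"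
  define Lq where "Lq = Kd/m + Bb*Lz/m^2"
  define Bq where "Bq = Bb/m"
  define Lc where "Lc = Lq*Bw + (P+Bq)*Kd"
  define Bc where "Bc = (P+Bq)*Bw"
  define L where "L = 4*(4*(Lc*(2*R) + Bc*2))"
  have Kd0: "Kd \<ge> 0" using K R by (simp add: Kd_def)
  have Bb0: "Bb \<ge> 0" and Bw0: "Bw \<ge> 0" using K by (auto simp: Bb_def Bw_def)
  have Lz0: "Lz \<ge> 0" using Kd0 by (simp add: Lz_def)
  have Lq0: "Lq \<ge> 0" using Kd0 Bb0 Lz0 m by (simp add: Lq_def)
  have Bq0: "Bq \<ge> 0" using Bb0 m by (simp add: Bq_def)
  have Lc0: "Lc \<ge> 0" using Lq0 Bw0 P0 Bq0 Kd0 by (simp add: Lc_def)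
  have Bc0: "Bc \<ge> 0" using Bw0 P0 Bq0 by (simp add: Bc_def)
  have L0: "L \<ge> 0" using Lc0 Bc0 R by (simp add: L_def)
  show ?thesis
  proof (intro exI[of _ L] conjI allI impI ballI L0)
    fix y z :: config and i :: nat
    assume yR: "\<forall>i\<in>{1..4}. norm (y i) \<le> R" and zR: "\<forall>i\<in>{1..4}. norm (z i) \<le> R" and i: "i \<in> {1..4}"
    define S where "S = (\<Sum>k\<in>{1..4}. norm (y k - z k))"
    have S0: "S \<ge> 0" unfolding S_def by (simp add: sum_nonneg)
    have dy: "norm (y k - y l)^2 \<in> {0..4*R^2}" if "k \<in> {1..4}" "l \<in> {1..4}" for k l
      using dd_bound(2)[OF yR that] .
    have dz: "norm (z k - z l)^2 \<in> {0..4*R^2}" if "k \<in> {1..4}" "l \<in> {1..4}" for k l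
      using dd_bound(2)[OF zR that] .
    have ddl: "\<bar>norm (y k - y l)^2 - norm (z k - z l)^2\<bar> \<le> (8*R) * S" if "k \<in> {1..4}" "l \<in> {1..4}" for k l
      using dd_lip[OF yR zR that] unfolding S_def .
    have hb: "\<bar>\<beta> (norm (y k - y l)^2) - \<beta> (norm (z k - z l)^2)\<bar> \<le> Kd * S" if "k \<in> {1..4}" "l \<in> {1..4}" for k l
    proof -
      have "\<bar>\<beta> (norm (y k - y l)^2) - \<beta> (norm (z k - z l)^2)\<bar> \<le> K * \<bar>norm (y k - y l)^2 - norm (z k - z l)^2\<bar>"
        using lip dy[OF that] dz[OF that] by blast
      also have "\<dots> \<le> K * ((8*R) * S)" by (rule mult_left_mono[OF ddl[OF that] K])
      finally show ?thesis by (simp add: Kd_def algebra_simps)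
    qed
    have hw: "\<bar>wfun \<beta> (norm (y k - y l)^2) - wfun \<beta> (norm (z k - z l)^2)\<bar> \<le> Kd * S" if "k \<in> {1..4}" "l \<in> {1..4}" for k l
    proof -
      have "\<bar>wfun \<beta> (norm (y k - y l)^2) - wfun \<beta> (norm (z k - z l)^2)\<bar> \<le> K * \<bar>norm (y k - y l)^2 - norm (z k - z l)^2\<bar>"
        using lip dy[OF that] dz[OF that] by blast
      also have "\<dots> \<le> K * ((8*R) * S)" by (rule mult_left_mono[OF ddl[OF that] K])
      finally show ?thesis by (simp add: Kd_def algebra_simps)
    qed
    have bnd: "\<bar>\<beta> d\<bar> \<le> Bb \<and> \<bar>wfun \<beta> d\<bar> \<le> Bw" if "d \<in> {0..4*R^2}" for d
    proof -
      have z: "(0::real) \<in> {0..4*R^2}" by simp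
      have "\<bar>\<beta> d - \<beta> 0\<bar> \<le> K * \<bar>d - 0\<bar>" "\<bar>wfun \<beta> d - wfun \<beta> 0\<bar> \<le> K * \<bar>d - 0\<bar>"
        using lip that z by blast+
      moreover have "K * \<bar>d - 0\<bar> \<le> K * (4*R^2)" using that K by (intro mult_left_mono) auto
      ultimately show ?thesis unfolding Bb_def Bw_def by linarith
    qed
    have Zy: "Zd \<beta> y \<ge> m" by (rule Zd_lower[OF _ m]) (use bm dy in blast)
    have Zz: "Zd \<beta> z \<ge> m" by (rule Zd_lower[OF _ m]) (use bm dz in blast)
    have Zl: "\<bar>Zd \<beta> y - Zd \<beta> z\<bar> \<le> Lz * S"
      using Zd_lip[where y=y and z=z and \<beta>=\<beta> and C="Kd * S"] hb by (simp add: Lz_def)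
    have ql: "\<bar>qq \<beta> 4 y k l - qq \<beta> 4 z k l\<bar> \<le> Lq * S" if "k \<in> {1..4}" "l \<in> {1..4}" for k l
      unfolding qq_Zd Lq_def
      by (rule div_lip[OF hb[OF that] Zl _ Zy Zz m Kd0 Lz0 S0]) (use bnd dz[OF that] in blast)
    have qb: "\<bar>qq \<beta> 4 z k l\<bar> \<le> Bq" if "k \<in> {1..4}" "l \<in> {1..4}" for k l
    proof -
      have "\<bar>qq \<beta> 4 z k l\<bar> = \<bar>\<beta> (norm (z k - z l)^2)\<bar> / Zd \<beta> z" using Zz m by (simp add: qq_Zd abs_divide)
      also have "\<dots> \<le> Bb / m" by (rule frac_le) (use bnd dz[OF that] Bb0 Zz m in auto)
      finally show ?thesis by (simp add: Bq_def)
    qed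
    define c where "c w j = (p i j - qq \<beta> 4 w i j) * wfun \<beta> ((norm (w i - w j))^2)" for w j
    have cl: "\<bar>c y j - c z j\<bar> \<le> Lc * S" if j: "j \<in> {1..4}" for j
      unfolding c_def Lc_def
    proof (rule prod_lip[OF _ hw[OF i j] _ _ Lq0 Kd0 S0])
      show "\<bar>p i j - qq \<beta> 4 y i j - (p i j - qq \<beta> 4 z i j)\<bar> \<le> Lq * S"
        using ql[OF i j] by (simp add: abs_minus_commute)
      show "\<bar>p i j - qq \<beta> 4 z i j\<bar> \<le> P + Bq" using P[rule_format, of i j] qb[OF i j] by linarith
      show "\<bar>wfun \<beta> (norm (y i - y j)^2)\<bar> \<le> Bw" using bnd dy[OF i j] by blast
    qed
    have cb: "\<bar>c z j\<bar> \<le> Bc" if j: "j \<in> {1..4}" for j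
    proof -
      have "\<bar>c z j\<bar> = \<bar>p i j - qq \<beta> 4 z i j\<bar> * \<bar>wfun \<beta> ((norm (z i - z j))^2)\<bar>" by (simp add: c_def abs_mult)
      also have "\<dots> \<le> (P + Bq) * Bw"
      proof (intro mult_mono)
        show "\<bar>p i j - qq \<beta> 4 z i j\<bar> \<le> P + Bq" using P[rule_format, of i j] qb[OF i j] by linarith
        show "\<bar>wfun \<beta> ((norm (z i - z j))^2)\<bar> \<le> Bw" using bnd dz[OF i j] by blast
      qed (use P0 Bq0 in auto)
      finally show ?thesis by (simp add: Bc_def)
    qed
    have trm: "norm (c y j *\<^sub>R (y i - y j) - c z j *\<^sub>R (z i - z j)) \<le> Lc*(2*R)*S + Bc*2*S" if j: "j \<in> {1..4}" for j
    proof -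
      have "c y j *\<^sub>R (y i - y j) - c z j *\<^sub>R (z i - z j) = (c y j - c z j) *\<^sub>R (y i - y j) + c z j *\<^sub>R ((y i - y j) - (z i - z j))"
        by (simp add: algebra_simps)
      hence "norm (c y j *\<^sub>R (y i - y j) - c z j *\<^sub>R (z i - z j)) \<le> \<bar>c y j - c z j\<bar> * norm (y i - y j) + \<bar>c z j\<bar> * norm ((y i - y j) - (z i - z j))"
        by (metis norm_scaleR norm_triangle_ineq)
      also have "\<dots> \<le> (Lc * S) * (2*R) + Bc * (2*S)"
        by (intro add_mono mult_mono) (use cl[OF j] cb[OF j] dd_bound(1)[OF yR i j] diff_lip[OF i j, of y z] Lc0 S0 Bc0 in \<open>auto simp: S_def\<close>)
      finally show ?thesis by (simp add: algebra_simps)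
    qed
    have "flow_rhs p \<beta> 4 y i - flow_rhs p \<beta> 4 z i = 4 *\<^sub>R (\<Sum>j\<in>{1..4}-{i}. c y j *\<^sub>R (y i - y j) - c z j *\<^sub>R (z i - z j))"
      by (simp add: flow_rhs_def c_def sum_subtractf scaleR_diff_right)
    hence "norm (flow_rhs p \<beta> 4 y i - flow_rhs p \<beta> 4 z i) = 4 * norm (\<Sum>j\<in>{1..4}-{i}. c y j *\<^sub>R (y i - y j) - c z j *\<^sub>R (z i - z j))"
      by simp
    also have "\<dots> \<le> 4 * (\<Sum>j\<in>{1..4}-{i}. Lc*(2*R)*S + Bc*2*S)"
      by (intro mult_left_mono sum_norm_le trm) auto
    also have "\<dots> \<le> 4 * (\<Sum>j\<in>{1..4::nat}. Lc*(2*R)*S + Bc*2*S)"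
      by (intro mult_left_mono sum_mono2) (use Lc0 Bc0 S0 R in auto)
    also have "\<dots> = L * S" by (simp add: L_def algebra_simps)
    finally show "norm (flow_rhs p \<beta> 4 y i - flow_rhs p \<beta> 4 z i) \<le> L * (\<Sum>k\<in>{1..4}. norm (y k - z k))"
      unfolding S_def .
  qed
qed

lemma vd_inner_self:
  fixes f :: "real \<Rightarrow> 'a::real_inner"
  assumes "(f has_vector_derivative v) (at t)"
  shows "((\<lambda>s. inner (f s) (f s)) has_real_derivative 2 * inner (f t) v) (at t)"
proof -
  have d: "(f has_derivative (\<lambda>h. h *\<^sub>R v)) (at t)" using assms by (simp add: has_vector_derivative_def)
  have "((\<lambda>s. inner (f s) (f s)) has_derivative (\<lambda>h. inner (f t) (h *\<^sub>R v) + inner (h *\<^sub>R v) (f t))) (at t)"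
    by (rule has_derivative_inner[OF d d])
  moreover have "(\<lambda>h. inner (f t) (h *\<^sub>R v) + inner (h *\<^sub>R v) (f t)) = (*) (2 * inner (f t) v)"
    by (auto simp: inner_commute algebra_simps)
  ultimately show ?thesis by (simp add: has_field_derivative_def)
qed

lemma sq_sum4:
  fixes a :: "nat \<Rightarrow> real"
  shows "(\<Sum>k\<in>{1..4}. a k)^2 \<le> 4 * (\<Sum>k\<in>{1..4}. (a k)^2)"
proof -
  have e: "{1..4::nat} = {1,2,3,4}" by auto
  have "4 * (a 1^2 + a 2^2 + a 3^2 + a 4^2) - (a 1 + a 2 + a 3 + a 4)^2 =
     (a 1 - a 2)^2 + (a 1 - a 3)^2 + (a 1 - a 4)^2 + (a 2 - a 3)^2 + (a 2 - a 4)^2 + (a 3 - a 4)^2"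
    by (simp add: power2_eq_square algebra_simps)
  moreover have "0 \<le> (a 1 - a 2)^2 + (a 1 - a 3)^2 + (a 1 - a 4)^2 + (a 2 - a 3)^2 + (a 2 - a 4)^2 + (a 3 - a 4)^2"
    by simp
  moreover have h3: "(\<Sum>k\<in>{1..4}. a k) = a 1 + a 2 + a 3 + a 4" and h4: "(\<Sum>k\<in>{1..4}. (a k)^2) = a 1^2 + a 2^2 + a 3^2 + a 4^2"
    unfolding e by simp_all
  ultimately show ?thesis unfolding h3 h4 by linarith
qed
lemma flow_cont:
  assumes "is_flow_solution p \<beta> n Y0 Y" "i \<in> {1..n}"
  shows "continuous_on {0..T} (\<lambda>s. Y s i)"
proof -
  have "continuous (at s within {0..}) (\<lambda>s. Y s i)" if "s \<in> {0..T}" for s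
  proof -
    have "((\<lambda>s. Y s i) has_vector_derivative flow_rhs p \<beta> n (Y s) i) (at s within {0..})"
      using assms that unfolding is_flow_solution_def by auto
    thus ?thesis by (rule has_vector_derivative_continuous)
  qed
  thus ?thesis unfolding continuous_on_eq_continuous_within
    by (meson atLeastAtMost_iff atLeast_iff continuous_within_subset subsetI)
qed

lemma flow_deriv_at:
  assumes "is_flow_solution p \<beta> n Y0 Y" "i \<in> {1..n}" "t > 0"
  shows "((\<lambda>s. Y s i) has_vector_derivative flow_rhs p \<beta> n (Y t) i) (at t)"
proof -
  have "((\<lambda>s. Y s i) has_vector_derivative flow_rhs p \<beta> n (Y t) i) (at t within {0..})"
    using assms unfolding is_flow_solution_def by auto
  moreover have "at t within {0..} = at t" using assms(3) by (intro at_within_interior) simp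
  ultimately show ?thesis by simp
qed

lemma uniq:
  assumes gb: "good_beta \<beta>" and P: "\<forall>i j. \<bar>p i j\<bar> \<le> P"
    and Y: "is_flow_solution p \<beta> 4 Y0 Y" and Z: "is_flow_solution p \<beta> 4 Y0 Z"
    and T: "T \<ge> 0" and i: "i \<in> {1..4}"
  shows "Y T i = Z T i"
proof -
  define A where "A = {1..4::nat}"
  define Kset where "Kset = (\<Union>i\<in>A. (\<lambda>s. Y s i) ` {0..T}) \<union> (\<Union>i\<in>A. (\<lambda>s. Z s i) ` {0..T})"
  have "compact Kset" unfolding Kset_def A_def
    by (intro compact_Un compact_UN compact_continuous_image flow_cont[OF Y] flow_cont[OF Z]) auto
  then obtain R where R: "R > 0" "\<forall>x\<in>Kset. norm x \<le> R"
    using compact_imp_bounded bounded_pos by metis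
  have yR: "\<forall>i\<in>{1..4}. norm (Y s i) \<le> R" and zR: "\<forall>i\<in>{1..4}. norm (Z s i) \<le> R" if "s \<in> {0..T}" for s
  proof -
    have "Y s i \<in> Kset \<and> Z s i \<in> Kset" if "i \<in> {1..4}" for i
      unfolding Kset_def A_def using that \<open>s \<in> {0..T}\<close> by blast
    thus "\<forall>i\<in>{1..4}. norm (Y s i) \<le> R" "\<forall>i\<in>{1..4}. norm (Z s i) \<le> R" using R by auto
  qed
  obtain L where L0: "L \<ge> 0" and L: "\<forall>y z. (\<forall>i\<in>{1..4}. norm (y i) \<le> R) \<longrightarrow> (\<forall>i\<in>{1..4}. norm (z i) \<le> R) \<longrightarrow>
     (\<forall>i\<in>{1..4}. norm (flow_rhs p \<beta> 4 y i - flow_rhs p \<beta> 4 z i) \<le> L * (\<Sum>k\<in>{1..4}. norm (y k - z k)))"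
    using flow_lip[OF gb P, of R] R by auto
  define D where "D s = (\<Sum>i\<in>{1..4::nat}. inner (Y s i - Z s i) (Y s i - Z s i))" for s
  define E where "E s = D s * exp (- (8*L) * s)" for s
  have contE: "continuous_on {0..T} E"
    unfolding E_def D_def
    by (intro continuous_intros continuous_on_diff flow_cont[OF Y] flow_cont[OF Z]) auto
  have derE: "\<exists>y. (E has_real_derivative y) (at s) \<and> y \<le> 0" if s: "0 < s" "s < T" for s
  proof -
    define e where "e i = Y s i - Z s i" for i
    define v where "v i = flow_rhs p \<beta> 4 (Y s) i - flow_rhs p \<beta> 4 (Z s) i" for i
    have dD: "(D has_real_derivative (\<Sum>i\<in>{1..4::nat}. 2 * inner (e i) (v i))) (at s)"
      unfolding D_def
    proof (rule DERIV_sum)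
      fix i :: nat assume "i \<in> {1..4}"
      hence "((\<lambda>s. Y s i - Z s i) has_vector_derivative v i) (at s)"
        unfolding v_def using s by (intro has_vector_derivative_diff flow_deriv_at[OF Y] flow_deriv_at[OF Z]) auto
      thus "((\<lambda>s. inner (Y s i - Z s i) (Y s i - Z s i)) has_real_derivative 2 * inner (e i) (v i)) (at s)"
        unfolding e_def by (rule vd_inner_self)
    qed
    define S where "S = (\<Sum>k\<in>{1..4}. norm (e k))"
    have sb: "s \<in> {0..T}" using s by auto
    have vb: "norm (v i) \<le> L * S" if "i \<in> {1..4}" for i
      using L yR[OF sb] zR[OF sb] that unfolding v_def S_def e_def by blast
    have "(\<Sum>i\<in>{1..4::nat}. 2 * inner (e i) (v i)) \<le> (\<Sum>i\<in>{1..4::nat}. 2 * (norm (e i) * (L * S)))"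
    proof (rule sum_mono)
      fix i :: nat assume i: "i \<in> {1..4}"
      have "inner (e i) (v i) \<le> norm (e i) * norm (v i)" by (rule norm_cauchy_schwarz)
      also have "\<dots> \<le> norm (e i) * (L * S)" by (intro mult_left_mono vb i) simp
      finally show "2 * inner (e i) (v i) \<le> 2 * (norm (e i) * (L * S))" by simp
    qed
    also have "\<dots> = 2 * L * S^2" by (simp add: S_def sum_distrib_left sum_distrib_right power2_eq_square algebra_simps)
    also have "\<dots> \<le> 2 * L * (4 * (\<Sum>k\<in>{1..4}. (norm (e k))^2))"
      using sq_sum4[of "\<lambda>k. norm (e k)"] L0 unfolding S_def by (intro mult_left_mono) auto
    also have "\<dots> = 8 * L * D s" by (simp add: D_def e_def power2_norm_eq_inner sum_distrib_left mult.assoc)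
    finally have Db: "(\<Sum>i\<in>{1..4::nat}. 2 * inner (e i) (v i)) \<le> 8 * L * D s" .
    have "(E has_real_derivative ((\<Sum>i\<in>{1..4::nat}. 2 * inner (e i) (v i)) * exp (- (8*L) * s) + D s * (exp (- (8*L) * s) * (- (8*L))))) (at s)"
    proof -
      have dexp: "((\<lambda>s. exp (- (8*L) * s)) has_real_derivative exp (- (8*L) * s) * (- (8*L))) (at s)"
        by (auto intro!: derivative_eq_intros)
      show ?thesis using DERIV_mult[OF dD dexp] unfolding E_def[abs_def] by (simp add: mult.commute mult.left_commute)
    qed
    moreover have "(\<Sum>i\<in>{1..4::nat}. 2 * inner (e i) (v i)) * exp (- (8*L) * s) + D s * (exp (- (8*L) * s) * (- (8*L))) \<le> 0"
    proof -
      have "(\<Sum>i\<in>{1..4::nat}. 2 * inner (e i) (v i)) * exp (- (8*L) * s) \<le> (8 * L * D s) * exp (- (8*L) * s)"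
        by (rule mult_right_mono[OF Db]) simp
      thus ?thesis by (simp add: algebra_simps)
    qed
    ultimately show ?thesis by blast
  qed
  have "E T \<le> E 0" by (rule DERIV_nonpos_imp_decreasing_open[OF T derE contE]) auto
  moreover have "E 0 = 0" unfolding E_def D_def using Y Z unfolding is_flow_solution_def by simp
  moreover have "D T \<ge> 0" unfolding D_def by (intro sum_nonneg) simp
  ultimately have "D T = 0" unfolding E_def by (smt (verit) exp_gt_zero mult_pos_pos)
  hence "\<forall>i\<in>{1..4::nat}. inner (Y T i - Z T i) (Y T i - Z T i) = 0"
    unfolding D_def by (subst (asm) sum_nonneg_eq_0_iff) auto
  thus ?thesis using i by auto
qed

lemma sum_rm:
  assumes "bij_betw \<sigma> A A" "k \<in> A"
  shows "(\<Sum>l\<in>A-{k}. h (\<sigma> l)) = (\<Sum>l\<in>A-{\<sigma> k}. h l)"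
proof -
  have "bij_betw \<sigma> (A-{k}) (A-{\<sigma> k})"
    by (rule bij_betw_DiffI[OF assms(1)]) (use assms bij_betwE in auto)
  thus ?thesis by (rule sum.reindex_bij_betw)
qed

lemma Zd_equiv:
  fixes Rf :: "real^2 \<Rightarrow> real^2"
  assumes lin: "linear Rf" and iso: "\<forall>v. norm (Rf v) = norm v" and bij: "bij_betw \<sigma> {1..4} {1..4}"
  shows "Zd \<beta> (\<lambda>k. Rf (y (\<sigma> k))) = Zd \<beta> y"
proof -
  have n: "norm (Rf a - Rf b) = norm (a - b)" for a b using iso linear_diff[OF lin] by metis
  have "Zd \<beta> (\<lambda>k. Rf (y (\<sigma> k))) = (\<Sum>k\<in>{1..4}. \<Sum>l\<in>{1..4}-{k}. \<beta> ((norm (y (\<sigma> k) - y (\<sigma> l)))^2))"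
    unfolding Zd_def n ..
  also have "\<dots> = (\<Sum>k\<in>{1..4}. \<Sum>l\<in>{1..4}-{\<sigma> k}. \<beta> ((norm (y (\<sigma> k) - y l))^2))"
    by (intro sum.cong refl sum_rm[OF bij]) 
  also have "\<dots> = Zd \<beta> y" unfolding Zd_def
    by (rule sum.reindex_bij_betw[OF bij, where g = "\<lambda>k. \<Sum>l\<in>{1..4}-{k}. \<beta> ((norm (y k - y l))^2)"])
  finally show ?thesis .
qed

lemma flow_equiv:
  fixes Rf :: "real^2 \<Rightarrow> real^2"
  assumes lin: "linear Rf" and iso: "\<forall>v. norm (Rf v) = norm v" and bij: "bij_betw \<sigma> {1..4} {1..4}"
    and ps: "\<forall>i\<in>{1..4}. \<forall>j\<in>{1..4}. p (\<sigma> i) (\<sigma> j) = p i j" and i: "i \<in> {1..4}"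
  shows "flow_rhs p \<beta> 4 (\<lambda>k. Rf (y (\<sigma> k))) i = Rf (flow_rhs p \<beta> 4 y (\<sigma> i))"
proof -
  have n: "norm (Rf a - Rf b) = norm (a - b)" for a b using iso linear_diff[OF lin] by metis
  define c where "c j = (p (\<sigma> i) j - qq \<beta> 4 y (\<sigma> i) j) * wfun \<beta> ((norm (y (\<sigma> i) - y j))^2)" for j
  have "flow_rhs p \<beta> 4 (\<lambda>k. Rf (y (\<sigma> k))) i = 4 *\<^sub>R (\<Sum>j\<in>{1..4}-{i}. c (\<sigma> j) *\<^sub>R Rf (y (\<sigma> i) - y (\<sigma> j)))"
    unfolding flow_rhs_def
  proof (intro arg_cong[where f="\<lambda>x. 4 *\<^sub>R x"] sum.cong refl)
    fix j assume j: "j \<in> {1..4} - {i}"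
    have "p i j = p (\<sigma> i) (\<sigma> j)" using ps i j by auto
    moreover have "qq \<beta> 4 (\<lambda>k. Rf (y (\<sigma> k))) i j = qq \<beta> 4 y (\<sigma> i) (\<sigma> j)"
      unfolding qq_Zd Zd_equiv[OF lin iso bij] n ..
    ultimately show "((p i j - qq \<beta> 4 (\<lambda>k. Rf (y (\<sigma> k))) i j) * wfun \<beta> ((norm (Rf (y (\<sigma> i)) - Rf (y (\<sigma> j))))^2)) *\<^sub>R (Rf (y (\<sigma> i)) - Rf (y (\<sigma> j)))
       = c (\<sigma> j) *\<^sub>R Rf (y (\<sigma> i) - y (\<sigma> j))"
      unfolding c_def n by (simp add: linear_diff[OF lin])
  qed
  also have "\<dots> = 4 *\<^sub>R (\<Sum>j\<in>{1..4}-{\<sigma> i}. c j *\<^sub>R Rf (y (\<sigma> i) - y j))"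
    using sum_rm[OF bij i, of "\<lambda>j. c j *\<^sub>R Rf (y (\<sigma> i) - y j)"] by simp
  also have "\<dots> = Rf (flow_rhs p \<beta> 4 y (\<sigma> i))"
    unfolding flow_rhs_def c_def by (simp add: linear_sum[OF lin] linear_scale[OF lin])
  finally show ?thesis .
qed

lemma norm_2: "norm (v::real^2) = sqrt ((v$1)^2 + (v$2)^2)"
  by (simp add: norm_vec_def L2_set_def sum_2)

lemma vec2_eq: "(v::real^2) = w \<longleftrightarrow> v$1 = w$1 \<and> v$2 = w$2"
  by (simp add: vec_eq_iff forall_2)

definition rot :: "real^2 \<Rightarrow> real^2" where "rot v = vector [- (v$2), v$1]"
definition rfl :: "real^2 \<Rightarrow> real^2" where "rfl v = vector [v$1, - (v$2)]"
definition srot :: "nat \<Rightarrow> nat" where "srot i = (if i = 1 then 4 else i - 1)"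
definition srfl :: "nat \<Rightarrow> nat" where "srfl i = (if i = 2 then 4 else if i = 4 then 2 else i)"

lemma rot_lin: "linear rot" unfolding linear_iff rot_def by (simp add: vec2_eq)
lemma rfl_lin: "linear rfl" unfolding linear_iff rfl_def by (simp add: vec2_eq)
lemma rot_iso: "\<forall>v. norm (rot v) = norm v" by (simp add: rot_def norm_2 add.commute)
lemma rfl_iso: "\<forall>v. norm (rfl v) = norm v" by (simp add: rfl_def norm_2)

lemma A4: "{1..4::nat} = {1,2,3,4}" by auto

lemma srot_bij: "bij_betw srot {1..4} {1..4}"
  unfolding bij_betw_def inj_on_def A4 by (auto simp: srot_def)
lemma srfl_bij: "bij_betw srfl {1..4} {1..4}"
  unfolding bij_betw_def inj_on_def A4 by (auto simp: srfl_def)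

lemma transform_solution:
  fixes Rf :: "real^2 \<Rightarrow> real^2"
  assumes lin: "linear Rf" and iso: "\<forall>v. norm (Rf v) = norm v" and bij: "bij_betw \<sigma> {1..4} {1..4}"
    and ps: "\<forall>i\<in>{1..4}. \<forall>j\<in>{1..4}. p (\<sigma> i) (\<sigma> j) = p i j"
    and Y: "is_flow_solution p \<beta> 4 Y0 Y" and init: "\<forall>i\<in>{1..4}. Rf (Y0 (\<sigma> i)) = Y0 i"
  shows "is_flow_solution p \<beta> 4 Y0 (\<lambda>t k. Rf (Y t (\<sigma> k)))"
  unfolding is_flow_solution_def
proof (intro conjI allI impI ballI)
  fix i :: nat assume i: "i \<in> {1..4}"
  have si: "\<sigma> i \<in> {1..4}" using bij i bij_betwE by blast
  show "Rf (Y 0 (\<sigma> i)) = Y0 i" using Y init si i unfolding is_flow_solution_def by auto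
next
  fix t :: real and i :: nat assume t: "t \<ge> 0" and i: "i \<in> {1..4}"
  have si: "\<sigma> i \<in> {1..4}" using bij i bij_betwE by blast
  have "((\<lambda>s. Y s (\<sigma> i)) has_vector_derivative flow_rhs p \<beta> 4 (Y t) (\<sigma> i)) (at t within {0..})"
    using Y t si unfolding is_flow_solution_def by auto
  hence "((\<lambda>s. Rf (Y s (\<sigma> i))) has_vector_derivative Rf (flow_rhs p \<beta> 4 (Y t) (\<sigma> i))) (at t within {0..})"
    by (rule bounded_linear.has_vector_derivative[OF linear_conv_bounded_linear[THEN iffD1, OF lin]])
  thus "((\<lambda>s. Rf (Y s (\<sigma> i))) has_vector_derivative flow_rhs p \<beta> 4 (\<lambda>k. Rf (Y t (\<sigma> k))) i) (at t within {0..})"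
    using flow_equiv[OF lin iso bij ps i] by simp
qed

lemma p_ex_char:
  assumes "i \<in> {1..4}" "j \<in> {1..4}"
  shows "p_ex a i j = (if i = j then 0 else if even (i+j) then (1-8*a)/4 else a)"
proof -
  have "i = 1 \<or> i = 2 \<or> i = 3 \<or> i = 4" "j = 1 \<or> j = 2 \<or> j = 3 \<or> j = 4" using assms by auto
  thus ?thesis by (elim disjE; simp add: p_ex_def doubleton_eq_iff)
qed

lemma p_ex_srot: "\<forall>i\<in>{1..4}. \<forall>j\<in>{1..4}. p_ex a (srot i) (srot j) = p_ex a i j"
proof (intro ballI)
  fix i j :: nat assume i: "i \<in> {1..4}" and j: "j \<in> {1..4}"
  have "srot i \<in> {1..4}" "srot j \<in> {1..4}" using i j srot_bij bij_betwE by blast+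
  moreover have "i = 1 \<or> i = 2 \<or> i = 3 \<or> i = 4" "j = 1 \<or> j = 2 \<or> j = 3 \<or> j = 4" using i j by auto
  ultimately show "p_ex a (srot i) (srot j) = p_ex a i j"
    using i j by (simp add: p_ex_char) (elim disjE; simp add: srot_def)
qed

lemma p_ex_srfl: "\<forall>i\<in>{1..4}. \<forall>j\<in>{1..4}. p_ex a (srfl i) (srfl j) = p_ex a i j"
proof (intro ballI)
  fix i j :: nat assume i: "i \<in> {1..4}" and j: "j \<in> {1..4}"
  have "srfl i \<in> {1..4}" "srfl j \<in> {1..4}" using i j srfl_bij bij_betwE by blast+
  moreover have "i = 1 \<or> i = 2 \<or> i = 3 \<or> i = 4" "j = 1 \<or> j = 2 \<or> j = 3 \<or> j = 4" using i j by auto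
  ultimately show "p_ex a (srfl i) (srfl j) = p_ex a i j"
    using i j by (simp add: p_ex_char) (elim disjE; simp add: srfl_def)
qed

lemma p_ex_bound: "\<forall>i j. \<bar>p_ex a i j\<bar> \<le> \<bar>a\<bar> + \<bar>(1 - 8*a)/4\<bar>"
  by (auto simp: p_ex_def)

lemma init_rot: "\<forall>i\<in>{1..4}. rot (Y0_ex X0 (srot i)) = Y0_ex X0 i"
  unfolding A4 by (auto simp: rot_def srot_def Y0_ex_def vec2_eq)

lemma init_rfl: "\<forall>i\<in>{1..4}. rfl (Y0_ex X0 (srfl i)) = Y0_ex X0 i"
  unfolding A4 by (auto simp: rfl_def srfl_def Y0_ex_def vec2_eq)

lemma norm_sq2: "(norm (v::real^2))^2 = (v$1)^2 + (v$2)^2"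
  by (simp add: norm_2)

lemma Y0_nsq:
  assumes "k \<in> {1..4}" "l \<in> {1..4}"
  shows "(norm (Y0_ex x k - Y0_ex x l))^2 = (if k = l then 0 else if even (k+l) then 4*x^2 else 2*x^2)"
proof -
  have "k = 1 \<or> k = 2 \<or> k = 3 \<or> k = 4" "l = 1 \<or> l = 2 \<or> l = 3 \<or> l = 4" using assms by auto
  thus ?thesis by (elim disjE; simp add: norm_sq2 Y0_ex_def; simp add: power2_eq_square algebra_simps)
qed

lemma Arm: "{1..4::nat} - {1} = {2,3,4}" "{1..4::nat} - {2} = {1,3,4}" "{1..4::nat} - {3} = {1,2,4}" "{1..4::nat} - {4} = {1,2,3}"
  by auto

lemma sum4: "(\<Sum>k\<in>{1..4::nat}. f k) = f 1 + f 2 + f 3 + f 4"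
  unfolding A4 by (simp add: add.assoc)

lemma Zd_Y0: "Zd \<beta> (Y0_ex x) = 8 * \<beta> (2*x^2) + 4 * \<beta> (4*x^2)"
  unfolding Zd_def sum4 Arm by (simp add: Y0_nsq)

lemma G_formula:
  "flow_rhs (p_ex a) \<beta> 4 (Y0_ex x) 1 $ 1 =
     4*x*(2*(a - \<beta> (2*x^2) / (8 * \<beta> (2*x^2) + 4 * \<beta> (4*x^2))) * wfun \<beta> (2*x^2)
        + 2*((1-8*a)/4 - \<beta> (4*x^2) / (8 * \<beta> (2*x^2) + 4 * \<beta> (4*x^2))) * wfun \<beta> (4*x^2))"
  unfolding flow_rhs_def qq_Zd Zd_Y0 Arm
  by (simp add: Y0_nsq p_ex_char) (simp add: Y0_ex_def algebra_simps)

lemma flow_cong: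
  assumes "\<forall>k\<in>{1..4}. y k = z k" "i \<in> {1..4}"
  shows "flow_rhs p \<beta> 4 y i = flow_rhs p \<beta> 4 z i"
proof -
  have Z: "Zd \<beta> y = Zd \<beta> z" unfolding Zd_def using assms by (intro sum.cong refl) auto
  show ?thesis unfolding flow_rhs_def qq_Zd Z using assms by (intro arg_cong[where f="\<lambda>x. 4 *\<^sub>R x"] sum.cong refl) auto
qed

lemma square_form:
  assumes gb: "good_beta \<beta>" and Y: "is_flow_solution (p_ex a) \<beta> 4 (Y0_ex X0) Y" and t: "t \<ge> 0"
  shows "\<forall>i\<in>{1..4}. Y t i = Y0_ex (Y t 1 $ 1) i"
proof -
  note P = p_ex_bound[of a]
  have Yr: "is_flow_solution (p_ex a) \<beta> 4 (Y0_ex X0) (\<lambda>t k. rot (Y t (srot k)))"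
    by (rule transform_solution[OF rot_lin rot_iso srot_bij p_ex_srot Y init_rot])
  have Yf: "is_flow_solution (p_ex a) \<beta> 4 (Y0_ex X0) (\<lambda>t k. rfl (Y t (srfl k)))"
    by (rule transform_solution[OF rfl_lin rfl_iso srfl_bij p_ex_srfl Y init_rfl])
  have er: "Y t i = rot (Y t (srot i))" if "i \<in> {1..4}" for i
    using uniq[OF gb P Y Yr t that] by simp
  have ef: "Y t i = rfl (Y t (srfl i))" if "i \<in> {1..4}" for i
    using uniq[OF gb P Y Yf t that] by simp
  have f1: "Y t 1 = rfl (Y t 1)" using ef[of 1] by (simp add: srfl_def)
  hence z: "Y t 1 $ 2 = 0" by (simp add: rfl_def vec2_eq)
  have r2: "Y t 2 = rot (Y t 1)" using er[of 2] by (simp add: srot_def)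
  have r3: "Y t 3 = rot (Y t 2)" using er[of 3] by (simp add: srot_def)
  have r4: "Y t 4 = rot (Y t 3)" using er[of 4] by (simp add: srot_def)
  show ?thesis unfolding A4
    using z r2 r3 r4 by (auto simp: Y0_ex_def vec2_eq rot_def)
qed

lemma scalar_ode:
  assumes gb: "good_beta \<beta>" and Y: "is_flow_solution (p_ex a) \<beta> 4 (Y0_ex X0) Y" and t: "t \<ge> 0"
  shows "((\<lambda>s. Y s 1 $ 1) has_real_derivative (flow_rhs (p_ex a) \<beta> 4 (Y0_ex (Y t 1 $ 1)) 1 $ 1)) (at t within {0..})"
proof -
  have "((\<lambda>s. Y s 1) has_vector_derivative flow_rhs (p_ex a) \<beta> 4 (Y t) 1) (at t within {0..})"
    using Y t unfolding is_flow_solution_def by auto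
  hence "((\<lambda>s. Y s 1 $ 1) has_vector_derivative flow_rhs (p_ex a) \<beta> 4 (Y t) 1 $ 1) (at t within {0..})"
    by (rule bounded_linear.has_vector_derivative[OF bounded_linear_vec_nth])
  moreover have "flow_rhs (p_ex a) \<beta> 4 (Y t) 1 = flow_rhs (p_ex a) \<beta> 4 (Y0_ex (Y t 1 $ 1)) 1"
    by (rule flow_cong[OF square_form[OF gb Y t]]) simp
  ultimately show ?thesis by (simp add: has_real_derivative_iff_has_vector_derivative)
qed

lemma Y0_at1: "Y0_ex X0 1 $ 1 = X0" by (simp add: Y0_ex_def)

lemma diam_lower:
  fixes y :: config
  shows "diam_conf 4 y \<ge> norm (y 1 - y 3)"
proof -
  have fin: "finite {norm (y i - y j) |i j. i \<in> {1..4::nat} \<and> j \<in> {1..4}}"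
    by (rule finite_subset[of _ "(\<lambda>(i,j). norm (y i - y j)) ` ({1..4}\<times>{1..4})"]) auto
  have "norm (y 1 - y 3) \<in> {norm (y i - y j) |i j. i \<in> {1..4::nat} \<and> j \<in> {1..4}}" by force
  thus ?thesis unfolding diam_conf_def by (rule Max_ge[OF fin])
qed

lemma stay_above:
  fixes u u' :: "real \<Rightarrow> real"
  assumes cont: "\<And>T. continuous_on {0..T} u"
    and der: "\<And>t. t > 0 \<Longrightarrow> (u has_real_derivative u' t) (at t)"
    and pos: "\<And>t. t > 0 \<Longrightarrow> u t < m2 \<Longrightarrow> u' t \<ge> 0"
    and u0: "m2 \<le> u 0" and t1: "t1 \<ge> 0"
  shows "u t1 \<ge> m2"
proof (rule ccontr)
  assume "\<not> u t1 \<ge> m2"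
  hence ut1: "u t1 < m2" by simp
  define A where "A = {s \<in> {0..t1}. u s \<ge> m2}"
  have A0: "0 \<in> A" using u0 t1 by (simp add: A_def)
  have bdd: "bdd_above A" unfolding A_def by (auto intro!: bdd_aboveI[of _ t1])
  define t0 where "t0 = Sup A"
  have t0ge: "s \<le> t0" if "s \<in> A" for s unfolding t0_def by (rule cSup_upper[OF that bdd])
  have t0le: "t0 \<le> t1" unfolding t0_def using A0 by (intro cSup_least) (auto simp: A_def)
  have t00: "t0 \<ge> 0" using t0ge[OF A0] .
  have ut0: "u t0 \<ge> m2"
  proof (rule ccontr)
    assume "\<not> u t0 \<ge> m2"
    hence "m2 - u t0 > 0" by simp
    with cont[of t1] t00 t0le obtain d where d: "d > 0" and dd: "\<forall>x'\<in>{0..t1}. dist x' t0 < d \<longrightarrow> dist (u x') (u t0) < m2 - u t0"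
      unfolding continuous_on_iff by (metis atLeastAtMost_iff)
    have "t0 - d < Sup A" using d by (simp add: t0_def)
    then obtain s where s: "s \<in> A" "t0 - d < s" using less_cSup_iff[OF _ bdd] A0 by blast
    have "s \<le> t0" using t0ge[OF s(1)] .
    hence "dist s t0 < d" using s(2) by (simp add: dist_real_def)
    moreover have "s \<in> {0..t1}" using s(1) by (simp add: A_def)
    ultimately have "dist (u s) (u t0) < m2 - u t0" using dd by blast
    hence "u s < m2" by (simp add: dist_real_def abs_less_iff)
    thus False using s(1) by (simp add: A_def)
  qed
  have lt: "t0 < t1" using ut0 ut1 t0le by (cases "t0 = t1") auto
  have below: "u s < m2" if "t0 < s" "s \<le> t1" for s
  proof (rule ccontr)
    assume "\<not> u s < m2"
    hence "s \<in> A" using that t00 by (simp add: A_def)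
    thus False using t0ge that by fastforce
  qed
  have "u t0 \<le> u t1"
  proof -
    have h: "\<exists>y. DERIV u x :> y \<and> y \<ge> 0" if x: "t0 < x" "x < t1" for x
    proof -
      have x0: "x > 0" using x t00 by linarith
      have "u' x \<ge> 0" by (rule pos[OF x0 below]) (use x in auto)
      thus ?thesis using der[OF x0] by blast
    qed
    have c: "continuous_on {t0..t1} u" using cont[of t1] by (rule continuous_on_subset) (use t00 in auto)
    show ?thesis by (rule DERIV_nonneg_imp_increasing_open[of t0 t1 u, OF less_imp_le[OF lt] h c])
  qed
  thus False using ut0 ut1 by simp
qed

lemma mono_deriv:
  fixes u u' :: "real \<Rightarrow> real"
  assumes cont: "\<And>T. continuous_on {0..T} u"
    and der: "\<And>t. t > 0 \<Longrightarrow> (u has_real_derivative u' t) (at t)"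
    and pos: "\<And>t. t > 0 \<Longrightarrow> u' t \<ge> 0" and t: "t \<ge> 0"
  shows "u 0 \<le> u t"
proof -
  have h: "\<exists>y. DERIV u x :> y \<and> y \<ge> 0" if x: "0 < x" "x < t" for x
    using der[OF x(1)] pos[OF x(1)] by blast
  show ?thesis by (rule DERIV_nonneg_imp_increasing_open[of 0 t u, OF t h cont])
qed

lemma sq_deriv:
  assumes "(f has_real_derivative d) (at t within S)"
  shows "((\<lambda>s. (f s)^2) has_real_derivative 2 * f t * d) (at t within S)"
  using DERIV_mult[OF assms assms] by (simp add: power2_eq_square algebra_simps)

lemma x_facts:
  assumes gb: "good_beta \<beta>" and Y: "is_flow_solution (p_ex a) \<beta> 4 (Y0_ex X0) Y"
  shows "\<And>T. continuous_on {0..T} (\<lambda>s. (Y s 1 $ 1)^2)"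
    and "\<And>t. t > 0 \<Longrightarrow> ((\<lambda>s. (Y s 1 $ 1)^2) has_real_derivative
          2 * (Y t 1 $ 1) * (flow_rhs (p_ex a) \<beta> 4 (Y0_ex (Y t 1 $ 1)) 1 $ 1)) (at t)"
    and "(Y 0 1 $ 1)^2 = X0^2"
    and "\<And>t. t \<ge> 0 \<Longrightarrow> diam_conf 4 (Y t) \<ge> 2 * sqrt ((Y t 1 $ 1)^2)"
proof -
  fix T :: real
  have "continuous_on {0..T} (\<lambda>s. Y s 1)" by (rule flow_cont[OF Y]) simp
  hence "continuous_on {0..T} (\<lambda>s. Y s 1 $ 1)" by (rule continuous_on_component)
  thus "continuous_on {0..T} (\<lambda>s. (Y s 1 $ 1)^2)" by (rule continuous_on_power)
next
  fix t :: real assume t: "t > 0"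
  have "((\<lambda>s. (Y s 1 $ 1)^2) has_real_derivative 2 * (Y t 1 $ 1) * (flow_rhs (p_ex a) \<beta> 4 (Y0_ex (Y t 1 $ 1)) 1 $ 1)) (at t within {0..})"
    by (rule sq_deriv[OF scalar_ode[OF gb Y]]) (use t in simp)
  moreover have "at t within {0..} = at t" using t by (intro at_within_interior) simp
  ultimately show "((\<lambda>s. (Y s 1 $ 1)^2) has_real_derivative 2 * (Y t 1 $ 1) * (flow_rhs (p_ex a) \<beta> 4 (Y0_ex (Y t 1 $ 1)) 1 $ 1)) (at t)"
    by simp
next
  have "Y 0 1 = Y0_ex X0 1" using Y unfolding is_flow_solution_def by simp
  thus "(Y 0 1 $ 1)^2 = X0^2" by (simp add: Y0_ex_def)
next
  fix t :: real assume t: "t \<ge> 0"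
  define x where "x = Y t 1 $ 1"
  have sq: "\<forall>i\<in>{1..4}. Y t i = Y0_ex x i" unfolding x_def by (rule square_form[OF gb Y t])
  have "Y t 1 = Y0_ex x 1" "Y t 3 = Y0_ex x 3" using sq by auto
  hence "norm (Y t 1 - Y t 3) = norm (Y0_ex x 1 - Y0_ex x 3)" by simp
  also have "\<dots> = sqrt ((2 * x)^2)"
    unfolding norm_2 by (simp add: Y0_ex_def)
  also have "\<dots> = \<bar>2 * x\<bar>" by (rule real_sqrt_abs)
  also have "\<dots> = 2 * sqrt (x^2)" by (simp add: real_sqrt_abs abs_mult)
  finally show "diam_conf 4 (Y t) \<ge> 2 * sqrt ((Y t 1 $ 1)^2)" using diam_lower[of "Y t"] unfolding x_def by simp
qed

abbreviation "b1 \<equiv> (\<lambda>x::real. inverse (1 + x))"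

lemma w1: assumes "v > -1" shows "wfun b1 v = -1/(1+v)"
proof -
  have "((\<lambda>x. ln (inverse (1 + x))) has_real_derivative -1/(1+v)) (at v)"
  proof -
    have h: "1 + (v * v + v * 2) = (1+v)*(1+v)" by (simp add: algebra_simps)
    have "(1+v)*(1+v) > 0" using assms by simp
    hence "1 + (v * v + v * 2) > 0" by (simp only: h)
    hence "1 + (v * v + v * 2) \<noteq> 0" by simp
    thus ?thesis using assms by (auto intro!: derivative_eq_intros simp: field_simps power2_eq_square)
  qed
  thus ?thesis by (rule DERIV_imp_deriv)
qed

lemma inv_lip:
  fixes x y :: real assumes "x \<ge> 0" "y \<ge> 0"
  shows "\<bar>1/(1+x) - 1/(1+y)\<bar> \<le> \<bar>x - y\<bar>"
proof -
  have "1/(1+x) - 1/(1+y) = (y - x) / ((1+x)*(1+y))" using assms by (simp add: field_simps)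
  hence "\<bar>1/(1+x) - 1/(1+y)\<bar> = \<bar>y - x\<bar> / ((1+x)*(1+y))" using assms by (simp add: abs_divide)
  also have "\<dots> \<le> \<bar>y - x\<bar> / 1"
  proof (rule divide_left_mono)
    have "1*1 \<le> (1+x)*(1+y)" by (rule mult_mono) (use assms in auto)
    thus "1 \<le> (1+x)*(1+y)" by simp
  qed (use assms in auto)
  finally show ?thesis by (simp add: abs_minus_commute)
qed

lemma b1_F1: "(x::real) \<in> {0..M} \<Longrightarrow> inverse (1 + x) \<ge> 1/(1+M)"
  using frac_le[of 1 1 "1+x" "1+M"] by (simp add: inverse_eq_divide)

lemma b1_F2: "(x::real) \<in> {0..M} \<Longrightarrow> y \<in> {0..M} \<Longrightarrow> \<bar>inverse (1 + x) - inverse (1 + y)\<bar> \<le> 1 * \<bar>x - y\<bar>"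
  using inv_lip[of x y] by (simp add: inverse_eq_divide)

lemma b1_F3: "(x::real) \<in> {0..M} \<Longrightarrow> y \<in> {0..M} \<Longrightarrow> \<bar>wfun b1 x - wfun b1 y\<bar> \<le> 1 * \<bar>x - y\<bar>"
proof -
  assume x: "x \<in> {0..M}" and y: "y \<in> {0..M}"
  have "wfun b1 x = -1/(1+x)" by (rule w1) (use x in auto)
  moreover have "wfun b1 y = -1/(1+y)" by (rule w1) (use y in auto)
  ultimately show ?thesis using inv_lip[of x y] x y by (simp add: abs_minus_commute)
qed

lemma good_b1: "good_beta b1"
  unfolding good_beta_def
proof (intro allI impI)
  fix M :: real assume M: "M \<ge> 0"
  show "\<exists>m K. m > 0 \<and> K \<ge> 0 \<and> (\<forall>x\<in>{0..M}. b1 x \<ge> m) \<and>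
     (\<forall>x\<in>{0..M}. \<forall>y\<in>{0..M}. \<bar>b1 x - b1 y\<bar> \<le> K * \<bar>x - y\<bar> \<and> \<bar>wfun b1 x - wfun b1 y\<bar> \<le> K * \<bar>x - y\<bar>)"
    using M b1_F1[of _ M] b1_F2[of _ M] b1_F3[of _ M]
    by (intro exI[of _ "1/(1+M)"] exI[of _ 1] conjI ballI) auto
qed

lemma G1u:
  fixes u x a :: real assumes u: "u \<ge> 0"
  shows "4*x*(2*(a - inverse(1+2*u)/(8*inverse(1+2*u) + 4*inverse(1+4*u))) * (-1/(1+2*u))
      + 2*((1-8*a)/4 - inverse(1+4*u)/(8*inverse(1+2*u) + 4*inverse(1+4*u))) * (-1/(1+4*u)))
    = 8*x*(a - (1+4*u)/(12+40*u))/((1+2*u)*(1+4*u))"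
proof -
  have d: "1+2*u > 0" "1+4*u > 0" "12+40*u > 0" using u by linarith+
  have Z: "8*inverse(1+2*u) + 4*inverse(1+4*u) = (12+40*u)/((1+2*u)*(1+4*u))"
    using d by (simp add: field_simps)
  have qs: "inverse(1+2*u)/(8*inverse(1+2*u) + 4*inverse(1+4*u)) = (1+4*u)/(12+40*u)"
  proof -
    have "inverse(1+2*u) * ((1+2*u)*(1+4*u)) = 1+4*u" using d by (simp add: mult.assoc[symmetric])
    thus ?thesis unfolding Z divide_divide_eq_right by simp
  qed
  have qd: "inverse(1+4*u)/(8*inverse(1+2*u) + 4*inverse(1+4*u)) = (1 - 8*((1+4*u)/(12+40*u)))/4"
  proof -
    have "inverse(1+4*u)/(8*inverse(1+2*u) + 4*inverse(1+4*u)) = (1+2*u)/(12+40*u)"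
    proof -
      have "inverse(1+4*u) * ((1+2*u)*(1+4*u)) = 1+2*u" using d by (simp add: mult.commute mult.left_commute)
      thus ?thesis unfolding Z divide_divide_eq_right by simp
    qed
    also have "\<dots> = (1 - 8*((1+4*u)/(12+40*u)))/4" using d by (simp add: field_simps)
    finally show ?thesis .
  qed
  define Q where "Q = (1+4*u)/(12+40*u)"
  have D: "(1+2*u)*(1+4*u) > 0" using d by simp
  have e1: "1 + (u * 6 + u * (u * 8)) = (1+2*u)*(1+4*u)" by (simp add: algebra_simps)
  have e2: "16 + (u * 96 + u * (u * 128)) = 16*((1+2*u)*(1+4*u))" by (simp add: algebra_simps)
  have g1: "1 + (u * 6 + u * (u * 8)) > 0" unfolding e1 by (rule D)
  have g2: "16 + (u * 96 + u * (u * 128)) > 0" unfolding e2 using D by simp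
  have D1: "1 + (u * 6 + u * (u * 8)) \<noteq> 0" "16 + (u * 96 + u * (u * 128)) \<noteq> 0"
    using g1 g2 by linarith+
  show ?thesis unfolding qs qd Q_def[symmetric] using d D1 by (simp add: field_simps)
qed

lemma G1:
  "flow_rhs (p_ex a) b1 4 (Y0_ex x) 1 $ 1 = 8*x*(a - (1+4*x^2)/(12+40*x^2))/((1+2*x^2)*(1+4*x^2))"
proof -
  have p: "(0::real) \<le> x^2" by simp
  have w2: "wfun b1 (2*x^2) = -1/(1+2*x^2)" by (rule w1) (use p in linarith)
  have w4: "wfun b1 (4*x^2) = -1/(1+4*x^2)" by (rule w1) (use p in linarith)
  show ?thesis unfolding G_formula w2 w4 using G1u[OF p, of x a] by simp
qed

lemma Q_le: "(u::real) \<ge> 0 \<Longrightarrow> (1+4* u)/(12+40* u) \<le> 1/10"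
  by (simp add: divide_simps)

lemma part1:
  assumes a: "1/10 < a" and X0: "X0 > 0" and Y: "is_flow_solution (p_ex a) (\<lambda>x. inverse (1 + x)) 4 (Y0_ex X0) Y"
  shows "\<exists>c>0. \<forall>t\<ge>1. diam_conf 4 (Y t) \<ge> c * t powr (1/4)"
proof -
  define u where "u t = (Y t 1 $ 1)^2" for t
  define H where "H z = 16* z*(a - (1+4* z)/(12+40* z))/((1+2* z)*(1+4* z))" for z :: real
  define \<epsilon> where "\<epsilon> = a - 1/10"
  have eps: "\<epsilon> > 0" using a by (simp add: \<epsilon>_def)
  note xf = x_facts[OF good_b1 Y]
  have cont: "continuous_on {0..T} u" for T unfolding u_def[abs_def] by (rule xf(1))
  have der: "(u has_real_derivative H (u t)) (at t)" if t: "t > 0" for t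
  proof -
    have "(u has_real_derivative 2 * (Y t 1 $ 1) * (flow_rhs (p_ex a) b1 4 (Y0_ex (Y t 1 $ 1)) 1 $ 1)) (at t)"
      unfolding u_def[abs_def] by (rule xf(2)[OF t])
    moreover have "2 * (Y t 1 $ 1) * (flow_rhs (p_ex a) b1 4 (Y0_ex (Y t 1 $ 1)) 1 $ 1) = H (u t)"
      unfolding G1 H_def u_def by (simp add: power2_eq_square)
    ultimately show ?thesis by simp
  qed
  have Hlow: "H z \<ge> 16*\<epsilon>* z/((1+2* z)*(1+4* z))" if z: "z \<ge> 0" for z
  proof -
    have "a - (1+4* z)/(12+40* z) \<ge> \<epsilon>" using Q_le[OF z] by (simp add: \<epsilon>_def)
    hence "16* z*(a - (1+4* z)/(12+40* z)) \<ge> 16* z*\<epsilon>" using z by (intro mult_left_mono) auto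
    thus ?thesis unfolding H_def using z by (intro divide_right_mono) (auto simp: algebra_simps)
  qed
  have Hpos: "H z \<ge> 0" if z: "z \<ge> 0" for z
    using Hlow[OF z] z eps by (smt (verit) divide_nonneg_pos mult_nonneg_nonneg mult_pos_pos)
  have u0: "u 0 = X0^2" unfolding u_def by (rule xf(3))
  have unn: "u t \<ge> 0" for t unfolding u_def by simp
  have ulow: "u t \<ge> X0^2" if t: "t \<ge> 0" for t
  proof -
    have "u 0 \<le> u t" by (rule mono_deriv[of u "\<lambda>s. H (u s)", OF cont der]) (use Hpos unn t in auto)
    thus ?thesis using u0 by simp
  qed
  define U0 where "U0 = X0^2"
  have U0: "U0 > 0" using X0 by (simp add: U0_def)
  define C where "C = (1/U0+2)*(1/U0+4)"
  have C: "C > 0" unfolding C_def using U0 by (intro mult_pos_pos) (simp_all add: add_pos_pos)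
  define \<kappa> where "\<kappa> = 32*\<epsilon>/C"
  have kap: "\<kappa> > 0" using eps C by (simp add: \<kappa>_def)
  have key: "2 * z * H z \<ge> \<kappa>" if z: "z \<ge> U0" for z
  proof -
    have v0: "z > 0" using z U0 by linarith
    have f1: "1+2* z \<le> z*(1/U0+2)" using z U0 v0 by (simp add: field_simps)
    have f2: "1+4* z \<le> z*(1/U0+4)" using z U0 v0 by (simp add: field_simps)
    have "(1+2* z)*(1+4* z) \<le> (z*(1/U0+2))*(z*(1/U0+4))"
      by (rule mult_mono[OF f1 f2]) (use v0 U0 in auto)
    also have "\<dots> = C * z^2" by (simp add: C_def power2_eq_square algebra_simps)
    finally have den: "(1+2* z)*(1+4* z) \<le> C * z^2" .
    have dp: "(1+2* z)*(1+4* z) > 0" using v0 by simp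
    have "\<kappa> = 32*\<epsilon>* z^2/(C* z^2)" using v0 C by (simp add: \<kappa>_def)
    also have "\<dots> \<le> 32*\<epsilon>* z^2/((1+2* z)*(1+4* z))"
      by (rule divide_left_mono[OF den]) (use eps v0 dp C in \<open>auto intro!: mult_pos_pos\<close>)
    also have "\<dots> = 2* z*(16*\<epsilon>* z/((1+2* z)*(1+4* z)))" by (simp add: power2_eq_square)
    also have "\<dots> \<le> 2* z* H z" using Hlow[of z] v0 by (intro mult_left_mono) auto
    finally show ?thesis .
  qed
  define w where "w t = (u t)^2 - \<kappa>* t" for t
  have contw: "continuous_on {0..T} w" for T unfolding w_def[abs_def]
    by (intro continuous_intros cont)
  have derw: "(w has_real_derivative (2 * u t * H (u t) - \<kappa>)) (at t)" if t: "t > 0" for t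
  proof -
    have "((\<lambda>s. (u s)^2) has_real_derivative 2 * u t * H (u t)) (at t)" by (rule sq_deriv[OF der[OF t]])
    moreover have "((\<lambda>s. \<kappa>* s) has_real_derivative \<kappa>) (at t)" by (auto intro!: derivative_eq_intros)
    ultimately show ?thesis unfolding w_def[abs_def] by (rule DERIV_diff)
  qed
  have wpos: "2 * u t * H (u t) - \<kappa> \<ge> 0" if t: "t > 0" for t
    using key[of "u t"] ulow[of t] t by (simp add: U0_def)
  have wmono: "w 0 \<le> w t" if "t \<ge> 0" for t
    by (rule mono_deriv[OF contw derw wpos that])
  have usq: "(u t)^2 \<ge> \<kappa> * t" if t: "t \<ge> 0" for t
  proof -
    have "X0^4 \<le> (u t)^2 - \<kappa> * t" using wmono[OF t] unfolding w_def by (simp add: u0)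
    moreover have "X0^4 \<ge> 0" by simp
    ultimately show ?thesis by linarith
  qed
  show ?thesis
  proof (intro exI[of _ "2 * \<kappa> powr (1/4)"] conjI allI impI)
    show "2 * \<kappa> powr (1/4) > 0" using kap by simp
    fix t :: real assume t1: "t \<ge> 1"
    hence t: "t \<ge> 0" by simp
    have up: "u t > 0" using ulow[OF t] U0 unfolding U0_def by linarith
    have "\<kappa> powr (1/4) * t powr (1/4) = (\<kappa> * t) powr (1/4)" using kap t by (simp add: powr_mult)
    also have "\<dots> \<le> ((u t)^2) powr (1/4)" by (rule powr_mono2) (use usq[OF t] kap t in auto)
    also have "((u t)^2) powr (1/4) = sqrt (u t)"
    proof -
      have "((u t)^2) powr (1/4) = ((u t) powr 2) powr (1/4)" using up by (simp add: powr_realpow)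
      also have "\<dots> = (u t) powr (1/2)" by (simp add: powr_powr)
      also have "\<dots> = sqrt (u t)" using up by (simp add: powr_half_sqrt)
      finally show ?thesis .
    qed
    finally have "\<kappa> powr (1/4) * t powr (1/4) \<le> sqrt (u t)" .
    hence "2 * \<kappa> powr (1/4) * t powr (1/4) \<le> 2 * sqrt (u t)" by simp
    also have "\<dots> \<le> diam_conf 4 (Y t)" using xf(4)[OF t] unfolding u_def .
    finally show "2 * \<kappa> powr (1/4) * t powr (1/4) \<le> diam_conf 4 (Y t)" .
  qed
qed

abbreviation "b2 \<equiv> (\<lambda>x::real. exp (- x))"

lemma w2: "wfun b2 v = -1"
proof -
  have e: "(\<lambda>x. ln (exp (- x))) = (\<lambda>x::real. - x)" by simp
  have "((\<lambda>x::real. - x) has_real_derivative -1) (at v)" by (auto intro!: derivative_eq_intros)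
  hence "deriv (\<lambda>x::real. - x) v = -1" by (rule DERIV_imp_deriv)
  thus ?thesis unfolding e .
qed

lemma exp_lip:
  fixes x y :: real assumes "x \<ge> 0" "y \<ge> 0"
  shows "\<bar>exp (- x) - exp (- y)\<bar> \<le> \<bar>x - y\<bar>"
proof -
  have main: "exp (- p) - exp (- q) \<le> q - p" if pq: "0 \<le> p" "p \<le> q" for p q :: real
  proof -
    have hh: "- p + - (q - p) = - q" by simp
    have ee: "exp (- p) * exp (- (q - p)) = exp (- q)" by (metis exp_add hh)
    have "exp (- p) * (1 - exp (- (q - p))) = exp (- p) * 1 - exp (- p) * exp (- (q - p))" by (rule right_diff_distrib)
    hence "exp (- p) - exp (- q) = exp (- p) * (1 - exp (- (q - p)))" unfolding ee by (simp only: mult_1_right)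
    also have "\<dots> \<le> 1 * (q - p)"
    proof (rule mult_mono)
      show "exp (- p) \<le> 1" using pq by simp
      have "1 + (p - q) \<le> exp (p - q)" by (rule exp_ge_add_one_self)
      moreover have "exp (- (q - p)) = exp (p - q)" by simp
      ultimately show "1 - exp (- (q - p)) \<le> q - p" by linarith
      show "0 \<le> 1 - exp (- (q - p))" using pq by simp
    qed simp
    finally show ?thesis by simp
  qed
  show ?thesis
  proof (cases "x \<le> y")
    case True
    have "exp (- y) \<le> exp (- x)" using True by simp
    thus ?thesis using main[OF assms(1) True] True by simp
  next
    case False
    have "exp (- x) \<le> exp (- y)" using False by simp
    thus ?thesis using main[OF assms(2)] False by simp
  qed
qed

lemma b2_F1: "(x::real) \<in> {0..M} \<Longrightarrow> exp (- x) \<ge> exp (- M)"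
  by simp

lemma b2_F2: "(x::real) \<in> {0..M} \<Longrightarrow> y \<in> {0..M} \<Longrightarrow> \<bar>exp (- x) - exp (- y)\<bar> \<le> 1 * \<bar>x - y\<bar>"
  using exp_lip[of x y] by simp

lemma b2_F3: "\<bar>wfun b2 x - wfun b2 y\<bar> \<le> 1 * \<bar>x - y\<bar>"
  unfolding w2 by simp

lemma good_b2: "good_beta b2"
  unfolding good_beta_def
proof (intro allI impI)
  fix M :: real assume M: "M \<ge> 0"
  show "\<exists>m K. m > 0 \<and> K \<ge> 0 \<and> (\<forall>x\<in>{0..M}. b2 x \<ge> m) \<and>
     (\<forall>x\<in>{0..M}. \<forall>y\<in>{0..M}. \<bar>b2 x - b2 y\<bar> \<le> K * \<bar>x - y\<bar> \<and> \<bar>wfun b2 x - wfun b2 y\<bar> \<le> K * \<bar>x - y\<bar>)"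
    using M b2_F1[of _ M] b2_F2[of _ M] b2_F3
    by (intro exI[of _ "exp (- M)"] exI[of _ 1] conjI ballI) auto
qed

lemma G2E:
  fixes E x a :: real assumes E: "E > 0"
  shows "4 * x * (2 * (a - E / (8 * E + 4 * E^2)) * (-1) + 2 * ((1 - 8 * a)/4 - E^2 / (8 * E + 4 * E^2)) * (-1))
       = 8 * x * (a - 1/(8 + 4 * E))"
proof -
  have d: "8 + 4 * E > 0" using E by simp
  have q1: "E / (8 * E + 4 * E^2) = 1/(8 + 4 * E)"
  proof -
    have "8 * E + 4 * E^2 = E * (8 + 4 * E)" by (simp add: power2_eq_square algebra_simps)
    thus ?thesis using E by simp
  qed
  have q2: "E^2 / (8 * E + 4 * E^2) = E/(8 + 4 * E)"
  proof -
    have "8 * E + 4 * E^2 = E * (8 + 4 * E)" by (simp add: power2_eq_square algebra_simps)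
    thus ?thesis using E by (simp add: power2_eq_square)
  qed
  have q3: "E/(8 + 4 * E) = (1 - 8 * (1/(8 + 4 * E)))/4" using d by (simp add: field_simps)
  define q where "q = 1/(8 + 4 * E)"
  show ?thesis unfolding q1 q2 q3 q_def[symmetric] by (simp add: field_simps)
qed

lemma G2:
  "flow_rhs (p_ex a) b2 4 (Y0_ex x) 1 $ 1 = 8 * x * (a - 1/(8 + 4 * exp (- 2 * x^2)))"
proof -
  have e4: "exp (- (4 * x^2)) = (exp (- (2 * x^2)))^2"
    by (simp add: power2_eq_square exp_add[symmetric])
  show ?thesis unfolding G_formula w2 e4 using G2E[of "exp (- (2 * x^2))" x a] by simp
qed

lemma part2:
  assumes a1: "1/12 < a" and a2: "a < 1/8" and X0: "X0 > 0"
    and Y: "is_flow_solution (p_ex a) (\<lambda>x. exp (- x)) 4 (Y0_ex X0) Y"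
  shows "\<exists>c>0. \<forall>t\<ge>0. diam_conf 4 (Y t) \<ge> c"
proof -
  define u where "u t = (Y t 1 $ 1)^2" for t
  define H where "H z = 16 * z * (a - 1/(8 + 4 * exp (- 2 * z)))" for z :: real
  note xf = x_facts[OF good_b2 Y]
  have cont: "continuous_on {0..T} u" for T unfolding u_def[abs_def] by (rule xf(1))
  have der: "(u has_real_derivative H (u t)) (at t)" if t: "t > 0" for t
  proof -
    have "(u has_real_derivative 2 * (Y t 1 $ 1) * (flow_rhs (p_ex a) b2 4 (Y0_ex (Y t 1 $ 1)) 1 $ 1)) (at t)"
      unfolding u_def[abs_def] by (rule xf(2)[OF t])
    moreover have "2 * (Y t 1 $ 1) * (flow_rhs (p_ex a) b2 4 (Y0_ex (Y t 1 $ 1)) 1 $ 1) = H (u t)"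
      unfolding G2 H_def u_def by (simp add: power2_eq_square)
    ultimately show ?thesis by simp
  qed
  have a0: "a > 0" using a1 by simp
  define r where "r = (1/a - 8)/4"
  have r0: "r > 0" using a2 a0 by (simp add: r_def field_simps)
  have r1: "r < 1" using a1 a0 by (simp add: r_def field_simps)
  define us where "us = - ln r / 2"
  have us0: "us > 0" using r0 r1 by (simp add: us_def)
  have Hpos: "H z \<ge> 0" if z: "0 \<le> z" "z \<le> us" for z
  proof -
    have "exp (- 2 * z) \<ge> exp (- 2 * us)" using z by simp
    also have "exp (- 2 * us) = r" using r0 by (simp add: us_def)
    finally have e: "exp (- 2 * z) \<ge> r" .
    have "8 + 4 * exp (- 2 * z) \<ge> 1/a" using e by (simp add: r_def field_simps)
    moreover have ep: "8 + 4 * exp (- 2 * z) > 0" by (simp add: add_pos_pos)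
    ultimately have "1/(8 + 4 * exp (- 2 * z)) \<le> 1/(1/a)" using a0 by (intro divide_left_mono) (auto simp: divide_pos_pos)
    hence "a - 1/(8 + 4 * exp (- 2 * z)) \<ge> 0" by simp
    thus ?thesis unfolding H_def using z by simp
  qed
  define m2 where "m2 = min (X0^2) us"
  have m2: "m2 > 0" using X0 us0 by (simp add: m2_def)
  have u0: "u 0 = X0^2" unfolding u_def by (rule xf(3))
  have ulow: "u t \<ge> m2" if t: "t \<ge> 0" for t
  proof (rule stay_above[of u "\<lambda>s. H (u s)", OF cont der])
    fix s :: real assume "s > 0" "u s < m2"
    moreover have "u s \<ge> 0" unfolding u_def by simp
    ultimately show "H (u s) \<ge> 0" by (intro Hpos) (auto simp: m2_def)
  qed (use u0 t in \<open>auto simp: m2_def\<close>)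
  show ?thesis
  proof (intro exI[of _ "2 * sqrt m2"] conjI allI impI)
    show "2 * sqrt m2 > 0" using m2 by simp
    fix t :: real assume t: "t \<ge> 0"
    have "2 * sqrt m2 \<le> 2 * sqrt (u t)" using ulow[OF t] by simp
    also have "\<dots> \<le> diam_conf 4 (Y t)" using xf(4)[OF t] unfolding u_def .
    finally show "2 * sqrt m2 \<le> diam_conf 4 (Y t)" .
  qed
qed

theorem mainTheorem7:
  shows "(\<forall>a X0 Y. 1/10 < a \<and> a < 1/8 \<and> X0 > 0 \<and>
            is_flow_solution (p_ex a) (\<lambda>x. inverse (1 + x)) 4 (Y0_ex X0) Y \<longrightarrow>
            (\<exists>c>0. \<forall>t\<ge>1. diam_conf 4 (Y t) \<ge> c * t powr (1/4)))
       \<and> (\<forall>a X0 Y. 1/12 < a \<and> a < 1/8 \<and> X0 > 0 \<and>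
            is_flow_solution (p_ex a) (\<lambda>x. exp (-x)) 4 (Y0_ex X0) Y \<longrightarrow>
            (\<exists>c>0. \<forall>t\<ge>0. diam_conf 4 (Y t) \<ge> c))"
  using part1 part2 by blast

end
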